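(* Let $w\in[0,\infty)^n$ and $c\in(0,\infty)^n$. Let $x,y,z$ be tuples of vertices such that the concatenations $xy$ and $xyz$ are both searches in $\mathcal G$, and suppose $\rho(z)\ge\rho(y)$. Then $$J^+(xy;w,c)\ge\min\{J^+(x;w,c),\,J^+(xyz;w,c)\}.$$
   Context: $\mathcal G=([n],\mathcal E)$ is a finite directed acyclic graph on $[n]$. A search is a tuple $s=(s_1,\dots,s_k)$ of distinct vertices ($0\le k\le n$) such that every in-neighbor of each $s_i$ belongs to $\{s_1,\dots,s_{i-1}\}$. For tuples $a,b$ with disjoint entries, $ab$ denotes their concatenation. For $w\in[0,\infty)^n$, $c\in(0,\infty)^n$ and a tuple $s$ of distinct vertices: $J(s;w,c)=\big(\sum_{i=1}^{|s|}c_{s_i}(1-\sum_{j<i}w_{s_j})\big)/\big(\sum_{i=1}^{|s|}w_{s_i}\big)$ if the denominator is positive and $+\infty$ otherwise (in particular for the empty tuple); $J^+=\max\{0,J\}$ with $\max\{0,+\infty\}=+\infty$. The density of a tuple (or set) is $\rho(A)=\sum_{i\in A}w_i/\sum_{i\in A}c_i$ for nonempty $A$ (taken over its underlying set) and $\rho(\emptyset)=0$. *)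

theory Defs
  imports "HOL-Library.Extended_Real"
begin

text \<open>A finite DAG on the vertex set [n] = {1..n}: edge relation E (pairs (u,v) meaning u -> v).\<close>
definition is_dag :: "nat \<Rightarrow> (nat \<times> nat) set \<Rightarrow> bool" where
  "is_dag n E \<longleftrightarrow> E \<subseteq> {1..n} \<times> {1..n} \<and> acyclic E"

definition is_search :: "nat \<Rightarrow> (nat \<times> nat) set \<Rightarrow> nat list \<Rightarrow> bool" where
  "is_search n E s \<longleftrightarrow> distinct s \<and> set s \<subseteq> {1..n} \<and>
     (\<forall>i < length s. \<forall>u. (u, s ! i) \<in> E \<longrightarrow> u \<in> set (take i s))"

definition J :: "nat list \<Rightarrow> (nat \<Rightarrow> real) \<Rightarrow> (nat \<Rightarrow> real) \<Rightarrow> ereal" where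
  "J s w c = (let den = (\<Sum>i<length s. w (s ! i)) in
     if den > 0 then
       ereal ((\<Sum>i<length s. c (s ! i) * (1 - (\<Sum>j<i. w (s ! j)))) / den)
     else \<infinity>)"

definition Jplus :: "nat list \<Rightarrow> (nat \<Rightarrow> real) \<Rightarrow> (nat \<Rightarrow> real) \<Rightarrow> ereal" where
  "Jplus s w c = max 0 (J s w c)"

definition rho :: "nat list \<Rightarrow> (nat \<Rightarrow> real) \<Rightarrow> (nat \<Rightarrow> real) \<Rightarrow> real" where
  "rho s w c = (if s = [] then 0 else (\<Sum>i\<in>set s. w i) / (\<Sum>i\<in>set s. c i))"

end

theory Submission
  imports Defs
begin

fun Nr :: "(nat \<Rightarrow> real) \<Rightarrow> (nat \<Rightarrow> real) \<Rightarrow> nat list \<Rightarrow> real \<Rightarrow> real" where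
  "Nr w c [] a = 0"
| "Nr w c (v # s) a = c v * a + Nr w c s (a - w v)"

lemma N_eq: "(\<Sum>i<length s. c (s ! i) * (a - (\<Sum>j<i. w (s ! j)))) = Nr w c s a"
proof (induction s arbitrary: a)
  case Nil then show ?case by simp
next
  case (Cons v s)
  have "(\<Sum>i<length (v#s). c ((v#s) ! i) * (a - (\<Sum>j<i. w ((v#s) ! j))))
     = c v * a + (\<Sum>i<length s. c (s ! i) * (a - (\<Sum>j<Suc i. w ((v#s) ! j))))"
    by (simp add: sum.lessThan_Suc_shift del: sum.lessThan_Suc)
  also have "\<dots> = c v * a + (\<Sum>i<length s. c (s ! i) * ((a - w v) - (\<Sum>j<i. w (s ! j))))"
    by (simp add: sum.lessThan_Suc_shift diff_diff_eq del: sum.lessThan_Suc)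
  finally show ?case using Cons by simp
qed

lemma W_eq: "(\<Sum>i<length s. w (s ! i)) = sum_list (map w s)"
  by (simp add: sum_list_sum_nth atLeast0LessThan)

lemma J_eq: "J s w c = (if sum_list (map w s) > 0 then ereal (Nr w c s 1 / sum_list (map w s)) else \<infinity>)"
  unfolding J_def Let_def W_eq N_eq by simp

lemma Nr_app: "Nr w c (xs @ ys) a = Nr w c xs a + Nr w c ys (a - sum_list (map w xs))"
  by (induction xs arbitrary: a) (auto simp: algebra_simps)

lemma W_nonneg: "\<forall>v\<in>set s. (w::nat\<Rightarrow>real) v \<ge> 0 \<Longrightarrow> sum_list (map w s) \<ge> 0"
  by (induction s) auto

lemma C_nonneg: "\<forall>v\<in>set s. (c::nat\<Rightarrow>real) v > 0 \<Longrightarrow> sum_list (map c s) \<ge> 0"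
  by (induction s) (auto intro: add_nonneg_nonneg less_imp_le)

lemma C_pos: "\<forall>v\<in>set s. (c::nat\<Rightarrow>real) v > 0 \<Longrightarrow> s \<noteq> [] \<Longrightarrow> sum_list (map c s) > 0"
proof (induction s)
  case Nil then show ?case by simp
next
  case (Cons v s)
  have "sum_list (map c s) \<ge> 0" using Cons.prems C_nonneg by simp
  moreover have "c v > 0" using Cons.prems by simp
  ultimately show ?case by simp
qed

lemma Nr_lower: "\<forall>v\<in>set s. w v \<ge> 0 \<and> c v > 0 \<Longrightarrow>
   Nr w c s a \<ge> sum_list (map c s) * (a - sum_list (map w s))"
proof (induction s arbitrary: a)
  case Nil then show ?case by simp
next
  case (Cons v s)
  have ih: "Nr w c s (a - w v) \<ge> sum_list (map c s) * (a - w v - sum_list (map w s))"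
    using Cons by simp
  have "sum_list (map w s) \<ge> 0" using Cons.prems W_nonneg by simp
  moreover have "w v \<ge> 0" "c v > 0" using Cons.prems by auto
  ultimately have "c v * a \<ge> c v * (a - w v - sum_list (map w s))" by simp
  then show ?case using ih by (simp add: algebra_simps)
qed

lemma Nr_upper: "\<forall>v\<in>set s. w v \<ge> 0 \<and> c v > 0 \<Longrightarrow>
   Nr w c s a \<le> sum_list (map c s) * a"
proof (induction s arbitrary: a)
  case Nil then show ?case by simp
next
  case (Cons v s)
  have ih: "Nr w c s (a - w v) \<le> sum_list (map c s) * (a - w v)"
    using Cons by simp
  have "sum_list (map c s) \<ge> 0" using Cons.prems C_nonneg by simp
  moreover have "w v \<ge> 0" using Cons.prems by auto
  ultimately have "sum_list (map c s) * (a - w v) \<le> sum_list (map c s) * a"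
    by (simp add: mult_left_mono)
  then show ?case using ih by (simp add: algebra_simps)
qed

lemma final_real:
  fixes D Z Nxy Nz :: real
  assumes "D > 0" "Z \<ge> 0" "Nz \<le> 0 \<or> Nz * D \<le> Z * Nxy"
  shows "max 0 ((Nxy + Nz) / (D + Z)) \<le> max 0 (Nxy / D)"
proof (cases "Nz \<le> 0")
  case True
  show ?thesis
  proof (cases "Nxy \<ge> 0")
    case True
    have "(Nxy + Nz) / (D + Z) \<le> Nxy / (D + Z)"
      using \<open>Nz \<le> 0\<close> assms by (simp add: divide_right_mono)
    also have "\<dots> \<le> Nxy / D" using True assms by (simp add: frac_le)
    finally show ?thesis by simp
  next
    case False
    then have "(Nxy + Nz) / (D + Z) \<le> 0" using \<open>Nz \<le> 0\<close> assms
      by (simp add: divide_nonpos_pos)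
    then show ?thesis by simp
  qed
next
  case False
  then have h: "Nz * D \<le> Z * Nxy" using assms by simp
  have "(Nxy + Nz) / (D + Z) \<le> Nxy / D"
    using h assms by (simp add: divide_simps algebra_simps)
  then show ?thesis by simp
qed

theorem proposition2:
  fixes n :: nat and E :: "(nat \<times> nat) set" and w c :: "nat \<Rightarrow> real"
    and x y z :: "nat list"
  assumes "is_dag n E"
    and "\<forall>i\<in>{1..n}. w i \<ge> 0"
    and "\<forall>i\<in>{1..n}. c i > 0"
    and "is_search n E (x @ y)"
    and "is_search n E (x @ y @ z)"
    and "rho z w c \<ge> rho y w c"
  shows "Jplus (x @ y) w c \<ge> min (Jplus x w c) (Jplus (x @ y @ z) w c)"
proof -
  have sub: "set (x @ y @ z) \<subseteq> {1..n}" and dist: "distinct (x @ y @ z)"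
    using assms(5) unfolding is_search_def by auto
  have good: "\<forall>v\<in>set (x@y@z). w v \<ge> 0 \<and> c v > 0" using sub assms(2,3) by auto
  then have gx: "\<forall>v\<in>set x. w v \<ge> 0 \<and> c v > 0"
    and gy: "\<forall>v\<in>set y. w v \<ge> 0 \<and> c v > 0"
    and gz: "\<forall>v\<in>set z. w v \<ge> 0 \<and> c v > 0" by auto
  define X where "X = sum_list (map w x)"
  define Y where "Y = sum_list (map w y)"
  define Z where "Z = sum_list (map w z)"
  define Cy where "Cy = sum_list (map c y)"
  define Cz where "Cz = sum_list (map c z)"
  define Nx where "Nx = Nr w c x 1"
  define Ny where "Ny = Nr w c y (1 - X)"
  define Nz where "Nz = Nr w c z (1 - X - Y)"
  have X0: "X \<ge> 0" unfolding X_def using gx W_nonneg by auto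
  have Y0: "Y \<ge> 0" unfolding Y_def using gy W_nonneg by auto
  have Z0: "Z \<ge> 0" unfolding Z_def using gz W_nonneg by auto
  have Jx: "J x w c = (if X > 0 then ereal (Nx / X) else \<infinity>)"
    unfolding J_eq X_def Nx_def by simp
  have Jxy: "J (x@y) w c = (if X + Y > 0 then ereal ((Nx + Ny) / (X + Y)) else \<infinity>)"
    unfolding J_eq X_def Nx_def Y_def Ny_def by (simp add: Nr_app)
  have Jxyz: "J (x@y@z) w c = (if X + Y + Z > 0 then ereal ((Nx + Ny + Nz) / (X + Y + Z)) else \<infinity>)"
    unfolding J_eq X_def Nx_def Y_def Ny_def Z_def Nz_def by (simp add: Nr_app algebra_simps)
  show ?thesis
  proof (cases "X + Y > 0")
    case False
    then show ?thesis unfolding Jplus_def Jxy by simp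
  next
    case D1: True
    show ?thesis
    proof (cases "J x w c \<le> J (x@y) w c")
      case True
      then have "Jplus x w c \<le> Jplus (x@y) w c" unfolding Jplus_def by (rule max.mono[OF order.refl])
      then show ?thesis by (simp add: min.coboundedI1)
    next
      case nle: False
      then have lt: "ereal ((Nx + Ny) / (X + Y)) < J x w c" using Jxy D1 by simp
      have yne: "y \<noteq> []" using nle by (metis append_Nil2 order_refl)
      have key: "Ny * (X + Y) \<le> (Nx + Ny) * Y"
      proof (cases "X > 0")
        case True
        then have "(Nx + Ny) / (X + Y) < Nx / X" using lt Jx by simp
        then have "(Nx + Ny) * X < Nx * (X + Y)" using True D1
          by (simp add: divide_simps mult.commute)
        then show ?thesis by (simp add: algebra_simps)
      next
        case False
        then have "X = 0" using X0 by simp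
        have "Nx \<ge> sum_list (map c x) * (1 - X)" unfolding Nx_def X_def using Nr_lower[OF gx] .
        moreover have "sum_list (map c x) \<ge> 0" using C_nonneg gx by auto
        ultimately have "Nx \<ge> 0" using \<open>X = 0\<close> by simp
        then show ?thesis using \<open>X = 0\<close> Y0 by (simp add: algebra_simps)
      qed
      define t where "t = 1 - X - Y"
      have Nylow: "Ny \<ge> Cy * t" unfolding Ny_def Cy_def t_def
        using Nr_lower[OF gy, of "1 - X"] by (simp add: Y_def algebra_simps)
      have Nzup: "Nz \<le> Cz * t" unfolding Nz_def Cz_def t_def using Nr_upper[OF gz] by simp
      have Cypos: "Cy > 0" unfolding Cy_def using C_pos gy yne by auto
      have Cz0: "Cz \<ge> 0" unfolding Cz_def using C_nonneg gz by auto
      have K: "Nz \<le> 0 \<or> Nz * (X + Y) \<le> Z * (Nx + Ny)"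
      proof (cases "t \<le> 0")
        case True
        have "Cz * t \<le> 0" using True Cz0 by (simp add: mult_nonneg_nonpos)
        then show ?thesis using Nzup by simp
      next
        case tpos: False
        have a: "Cy * t * (X + Y) \<le> (Nx + Ny) * Y"
          using key Nylow D1 by (meson less_imp_le mult_right_mono order_trans)
        have Ypos: "Y > 0"
        proof (rule ccontr)
          assume "\<not> Y > 0"
          then have "Y = 0" using Y0 by simp
          then have "Cy * t * (X + Y) \<le> 0" using a by simp
          moreover have "Cy * t * (X + Y) > 0" using Cypos tpos D1 by simp
          ultimately show False by simp
        qed
        have rhoy: "rho y w c = Y / Cy" unfolding rho_def Y_def Cy_def using yne dist
          by (simp add: sum_list_distinct_conv_sum_set)
        have rpos: "rho y w c > 0" using rhoy Ypos Cypos by simp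
        have zne: "z \<noteq> []" using assms(6) rpos unfolding rho_def by auto
        have Czpos: "Cz > 0" unfolding Cz_def using C_pos gz zne by auto
        have rhoz: "rho z w c = Z / Cz" unfolding rho_def Z_def Cz_def using zne dist
          by (simp add: sum_list_distinct_conv_sum_set)
        have b: "Y * Cz \<le> Z * Cy" using assms(6) rhoy rhoz Cypos Czpos
          by (simp add: divide_simps mult.commute)
        have "Nz * (X + Y) * Y \<le> Cz * t * (X + Y) * Y"
          using Nzup D1 Ypos by (simp add: mult_right_mono)
        also have "\<dots> = (Y * Cz) * (t * (X + Y))" by (simp add: algebra_simps)
        also have "\<dots> \<le> (Z * Cy) * (t * (X + Y))"
          using b tpos D1 by (simp add: mult_right_mono)
        also have "\<dots> = Z * (Cy * t * (X + Y))" by (simp add: algebra_simps)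
        also have "\<dots> \<le> Z * ((Nx + Ny) * Y)" using a Z0 by (simp add: mult_left_mono)
        finally have "(Nz * (X + Y)) * Y \<le> (Z * (Nx + Ny)) * Y" by (simp add: algebra_simps)
        then show ?thesis using Ypos by simp
      qed
      have R: "max 0 ((Nx + Ny + Nz) / (X + Y + Z)) \<le> max 0 ((Nx + Ny) / (X + Y))"
        using final_real[OF D1 Z0 K] by (simp add: algebra_simps)
      have "Jplus (x@y@z) w c \<le> Jplus (x@y) w c"
        unfolding Jplus_def Jxyz Jxy using D1 Z0 R
        by (simp add: max_def split: if_splits)
      then show ?thesis by (simp add: min.coboundedI2)
    qed
  qed
qed

end
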